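(* In the standing setting, let $(A,B,R,\sigma)$ be a normalized context and $(g,f)\in\mathcal{FC}$. If $g^{\uparrow}\ne f_\bot$, then there is no concept $\langle g_0,f_0\rangle\in\mathcal M$ with $\langle g,g^{\uparrow}\rangle\prec\langle g_0,f_0\rangle\prec\langle g_\top,f_\bot\rangle$. Dually, if $f^{\downarrow}\ne g_\bot$, then there is no concept $\langle g_0,f_0\rangle\in\mathcal M$ with $\langle g_\bot,f_\top\rangle\prec\langle g_0,f_0\rangle\prec\langle f^{\downarrow},f\rangle$. (Here $\prec$ denotes the strict order of $\mathcal M$.)
   Context: Adjoint triple: for posets $(P_1,\le_1),(P_2,\le_2),(P_3,\le_3)$, maps $\&\colon P_1\times P_2\to P_3$, $\swarrow\colon P_3\times P_2\to P_1$, $\nwarrow\colon P_3\times P_1\to P_2$ with $x\le_1 z\swarrow y \iff x\,\&\,y\le_3 z \iff y\le_2 z\nwarrow x$ for all $x,y,z$. For lower-bounded posets, $\&$ has zero-divisors if there are $x\ne\bot_1$, $y\neq\bot_2$ with $x\,\&\,y=\bot_3$. Standing setting: $(L_1,\preceq_1,\bot_1,\top_1)$ and $(L_2,\preceq_2,\bot_2,\top_2)$ are complete lattices and $(P,\le,\bot,\top)$ is a bounded poset. A multi-adjoint frame consists of adjoint triples $(\&_i,\swarrow^i,\nwarrow_i)$, $i=1,\dots,n$, with respect to $L_1,L_2,P$; a property-oriented frame consists of adjoint triples $(\&^p_j,\swarrow_p^j,\nwarrow^p_j)$, $j=1,\dots,m$, with respect to $P,L_2,L_1$; an object-oriented frame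 consists of adjoint triples $(\&^o_k,\swarrow_o^k,\nwarrow^o_k)$, $k=1,\dots,s$, with respect to $L_1,P,L_2$. All conjunctors $\&_i,\&^p_j,\&^o_k$ have no zero-divisors. A context $(A,B,R,\sigma)$ consists of non-empty sets $A,B$, $R\colon A\times B\to P$, and maps $\sigma,\sigma_p,\sigma_o$ from $A\times B$ to the index sets of the three frames. It is normalized if every $a\in A$ has $b_1,b_2\in B$ with $R(a,b_1)\ne\bot$, $R(a,b_2)=\bot$, and every $b\in B$ has $a_1,a_2\in A$ with $R(a_1,b)\neq\bot$, $R(a_2,b)=\bot$. Concept-forming operators: $g^{\uparrow}(a)=\inf\{R(a,b)\swarrow^{\sigma(a,b)}g(b)\mid b\in B\}$ for $g\in L_2^B$ and $f^{\downarrow}(b)=\inf\{R(a,b)\nwarrow_{\sigma(a,b)}f(a)\mid a\in A\}$ for $f\in L_1^A$. Multi-adjoint concept lattice $\mathcal M=\{\langle g,f\rangle\mid g\in L_2^B,f\in L_1^A,\ g^{\uparrow}=f,\ f^{\downarrow}=g\}$, ordered by $\langle g_1,f_1\rangle\preceq\langle g_2,f_2\rangle$ iff $g_1\preceq_2 g_2$ pointwise. Fuzzy necessity operators: $g^{\uparrow_N}(a)=\inf\{g(b)\swarrow_o^{\sigma_o(a,b)}R(a,b)\mid b\in B\}$ and $f^{\downarrow^N}(b)=\inf\{f(a)\nwarrow^p_{\sigma_p(a,b)}R(a,b)\mid a\in A\}$. $\mathcal F_N=\{(g,f)\mid g\in L_2^B,\ f\in L_1^A,\ g^{\uparrow_N}=f,\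 f^{\downarrow^N}=g\}$. For $X\subseteq B$, $\chi_X\in L_2^B$ takes value $\top_2$ on $X$ and $\bot_2$ elsewhere; for $Y\subseteq A$, $\chi_Y\in L_1^A$ takes value $\top_1$ on $Y$ and $\bot_1$ elsewhere. $\mathcal{FC}=\{(\chi_X,\chi_Y)\in\mathcal F_N\mid \varnothing\ne X\subsetneq B,\ \varnothing\neq Y\subsetneq A\}$. $g_\top,g_\bot\in L_2^B$ are the constant maps with values $\top_2,\bot_2$; $f_\top,f_\bot\in L_1^A$ are the constant maps with values $\top_1,\bot_1$. *)

theory Defs
  imports Main
begin

definition adjoint_triple ::
  "('a::order \<Rightarrow> 'b::order \<Rightarrow> 'c::order) \<Rightarrow> ('c \<Rightarrow> 'b \<Rightarrow> 'a) \<Rightarrow> ('c \<Rightarrow> 'a \<Rightarrow> 'b) \<Rightarrow> bool" where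
  "adjoint_triple cj sw nw \<longleftrightarrow>
     (\<forall>x y z. (x \<le> sw z y \<longleftrightarrow> cj x y \<le> z) \<and> (cj x y \<le> z \<longleftrightarrow> y \<le> nw z x))"

definition no_zero_divisors ::
  "('a::order_bot \<Rightarrow> 'b::order_bot \<Rightarrow> 'c::order_bot) \<Rightarrow> bool" where
  "no_zero_divisors cj \<longleftrightarrow> \<not> (\<exists>x y. x \<noteq> bot \<and> y \<noteq> bot \<and> cj x y = bot)"

definition adj_frame ::
  "nat \<Rightarrow> (nat \<Rightarrow> 'a::order_bot \<Rightarrow> 'b::order_bot \<Rightarrow> 'c::order_bot) \<Rightarrow> (nat \<Rightarrow> 'c \<Rightarrow> 'b \<Rightarrow> 'a)
     \<Rightarrow> (nat \<Rightarrow> 'c \<Rightarrow> 'a \<Rightarrow> 'b) \<Rightarrow> bool" where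
  "adj_frame n cj sw nw \<longleftrightarrow>
     (\<forall>i\<in>{1..n}. adjoint_triple (cj i) (sw i) (nw i) \<and> no_zero_divisors (cj i))"

text \<open>Normalized context; objects A and attributes B are the (non-empty) types 'o and 'at.\<close>
definition normalized :: "('o \<Rightarrow> 'at \<Rightarrow> 'p::bot) \<Rightarrow> bool" where
  "normalized R \<longleftrightarrow>
     (\<forall>a. (\<exists>b1. R a b1 \<noteq> bot) \<and> (\<exists>b2. R a b2 = bot)) \<and>
     (\<forall>b. (\<exists>a1. R a1 b \<noteq> bot) \<and> (\<exists>a2. R a2 b = bot))"

definition up_op ::
  "(nat \<Rightarrow> 'p \<Rightarrow> 'l2 \<Rightarrow> 'l1::complete_lattice) \<Rightarrow> ('o \<Rightarrow> 'at \<Rightarrow> nat) \<Rightarrow> ('o \<Rightarrow> 'at \<Rightarrow> 'p)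
     \<Rightarrow> ('at \<Rightarrow> 'l2) \<Rightarrow> ('o \<Rightarrow> 'l1)" where
  "up_op sw \<sigma> R g = (\<lambda>a. Inf {sw (\<sigma> a b) (R a b) (g b) | b. True})"

definition down_op ::
  "(nat \<Rightarrow> 'p \<Rightarrow> 'l1 \<Rightarrow> 'l2::complete_lattice) \<Rightarrow> ('o \<Rightarrow> 'at \<Rightarrow> nat) \<Rightarrow> ('o \<Rightarrow> 'at \<Rightarrow> 'p)
     \<Rightarrow> ('o \<Rightarrow> 'l1) \<Rightarrow> ('at \<Rightarrow> 'l2)" where
  "down_op nw \<sigma> R f = (\<lambda>b. Inf {nw (\<sigma> a b) (R a b) (f a) | a. True})"

definition concept_lattice ::
  "(nat \<Rightarrow> 'p \<Rightarrow> 'l2 \<Rightarrow> 'l1::complete_lattice) \<Rightarrow> (nat \<Rightarrow> 'p \<Rightarrow> 'l1 \<Rightarrow> 'l2::complete_lattice)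
     \<Rightarrow> ('o \<Rightarrow> 'at \<Rightarrow> nat) \<Rightarrow> ('o \<Rightarrow> 'at \<Rightarrow> 'p) \<Rightarrow> (('at \<Rightarrow> 'l2) \<times> ('o \<Rightarrow> 'l1)) set" where
  "concept_lattice sw nw \<sigma> R =
     {(g, f). up_op sw \<sigma> R g = f \<and> down_op nw \<sigma> R f = g}"

definition concept_le :: "('at \<Rightarrow> 'l2::order) \<times> 'x \<Rightarrow> ('at \<Rightarrow> 'l2) \<times> 'x \<Rightarrow> bool" where
  "concept_le p q \<longleftrightarrow> fst p \<le> fst q"

definition concept_less :: "('at \<Rightarrow> 'l2::order) \<times> 'x \<Rightarrow> ('at \<Rightarrow> 'l2) \<times> 'x \<Rightarrow> bool" where
  "concept_less p q \<longleftrightarrow> concept_le p q \<and> p \<noteq> q"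

definition upN_op ::
  "(nat \<Rightarrow> 'l2 \<Rightarrow> 'p \<Rightarrow> 'l1::complete_lattice) \<Rightarrow> ('o \<Rightarrow> 'at \<Rightarrow> nat) \<Rightarrow> ('o \<Rightarrow> 'at \<Rightarrow> 'p)
     \<Rightarrow> ('at \<Rightarrow> 'l2) \<Rightarrow> ('o \<Rightarrow> 'l1)" where
  "upN_op swo \<sigma>o R g = (\<lambda>a. Inf {swo (\<sigma>o a b) (g b) (R a b) | b. True})"

definition downN_op ::
  "(nat \<Rightarrow> 'l1 \<Rightarrow> 'p \<Rightarrow> 'l2::complete_lattice) \<Rightarrow> ('o \<Rightarrow> 'at \<Rightarrow> nat) \<Rightarrow> ('o \<Rightarrow> 'at \<Rightarrow> 'p)
     \<Rightarrow> ('o \<Rightarrow> 'l1) \<Rightarrow> ('at \<Rightarrow> 'l2)" where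
  "downN_op nwp \<sigma>p R f = (\<lambda>b. Inf {nwp (\<sigma>p a b) (f a) (R a b) | a. True})"

definition FN_set ::
  "(nat \<Rightarrow> 'l2 \<Rightarrow> 'p \<Rightarrow> 'l1::complete_lattice) \<Rightarrow> (nat \<Rightarrow> 'l1 \<Rightarrow> 'p \<Rightarrow> 'l2::complete_lattice)
     \<Rightarrow> ('o \<Rightarrow> 'at \<Rightarrow> nat) \<Rightarrow> ('o \<Rightarrow> 'at \<Rightarrow> nat) \<Rightarrow> ('o \<Rightarrow> 'at \<Rightarrow> 'p)
     \<Rightarrow> (('at \<Rightarrow> 'l2) \<times> ('o \<Rightarrow> 'l1)) set" where
  "FN_set swo nwp \<sigma>o \<sigma>p R =
     {(g, f). upN_op swo \<sigma>o R g = f \<and> downN_op nwp \<sigma>p R f = g}"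

definition chi :: "'x set \<Rightarrow> 'x \<Rightarrow> 'l::{bot,top}" where
  "chi X = (\<lambda>x. if x \<in> X then top else bot)"

definition FC_set ::
  "(nat \<Rightarrow> 'l2 \<Rightarrow> 'p \<Rightarrow> 'l1::complete_lattice) \<Rightarrow> (nat \<Rightarrow> 'l1 \<Rightarrow> 'p \<Rightarrow> 'l2::complete_lattice)
     \<Rightarrow> ('o \<Rightarrow> 'at \<Rightarrow> nat) \<Rightarrow> ('o \<Rightarrow> 'at \<Rightarrow> nat) \<Rightarrow> ('o \<Rightarrow> 'at \<Rightarrow> 'p)
     \<Rightarrow> (('at \<Rightarrow> 'l2) \<times> ('o \<Rightarrow> 'l1)) set" where
  "FC_set swo nwp \<sigma>o \<sigma>p R =
     {(chi X, chi Y) | X Y. (chi X, chi Y) \<in> FN_set swo nwp \<sigma>o \<sigma>p R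
        \<and> X \<noteq> {} \<and> X \<noteq> UNIV \<and> Y \<noteq> {} \<and> Y \<noteq> UNIV}"

end

theory Submission
  imports Defs
begin

lemma at_sw_bot:
  assumes "adjoint_triple cj sw nw" "no_zero_divisors cj" "y \<noteq> bot"
  shows "sw bot y = bot"
proof -
  have "cj (sw bot y) y \<le> bot" using assms(1) unfolding adjoint_triple_def by blast
  hence "cj (sw bot y) y = bot" by (simp add: bot_unique)
  thus ?thesis using assms(2,3) unfolding no_zero_divisors_def by blast
qed

lemma at_nw_bot:
  assumes "adjoint_triple cj sw nw" "no_zero_divisors cj" "x \<noteq> bot"
  shows "nw bot x = bot"
proof -
  have "cj x (nw bot x) \<le> bot" using assms(1) unfolding adjoint_triple_def by blast
  hence "cj x (nw bot x) = bot" by (simp add: bot_unique)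
  thus ?thesis using assms(2,3) unfolding no_zero_divisors_def by blast
qed

lemma at_nw_top:
  fixes cj :: "'a::order_bot \<Rightarrow> 'b::{order_bot,order_top} \<Rightarrow> 'c::order_bot"
  assumes "adjoint_triple cj sw nw"
  shows "nw z bot = top"
proof -
  have "cj bot top \<le> z" using assms unfolding adjoint_triple_def by (metis bot.extremum)
  hence "top \<le> nw z bot" using assms unfolding adjoint_triple_def by blast
  thus ?thesis by (simp add: top_unique)
qed

lemma at_sw_top:
  fixes cj :: "'a::{order_bot,order_top} \<Rightarrow> 'b::order_bot \<Rightarrow> 'c::order_bot"
  assumes "adjoint_triple cj sw nw"
  shows "sw z bot = top"
proof -
  have "cj top bot \<le> z" using assms unfolding adjoint_triple_def by (metis bot.extremum)
  hence "top \<le> sw z bot" using assms unfolding adjoint_triple_def by blast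
  thus ?thesis by (simp add: top_unique)
qed

theorem mainTheorem14:
  fixes cj :: "nat \<Rightarrow> 'l1::complete_lattice \<Rightarrow> 'l2::complete_lattice \<Rightarrow> 'p::{order_bot,order_top}"
    and sw :: "nat \<Rightarrow> 'p \<Rightarrow> 'l2 \<Rightarrow> 'l1" and nw :: "nat \<Rightarrow> 'p \<Rightarrow> 'l1 \<Rightarrow> 'l2"
    and cjp :: "nat \<Rightarrow> 'p \<Rightarrow> 'l2 \<Rightarrow> 'l1" and swp :: "nat \<Rightarrow> 'l1 \<Rightarrow> 'l2 \<Rightarrow> 'p"
    and nwp :: "nat \<Rightarrow> 'l1 \<Rightarrow> 'p \<Rightarrow> 'l2"
    and cjo :: "nat \<Rightarrow> 'l1 \<Rightarrow> 'p \<Rightarrow> 'l2" and swo :: "nat \<Rightarrow> 'l2 \<Rightarrow> 'p \<Rightarrow> 'l1"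
    and nwo :: "nat \<Rightarrow> 'l2 \<Rightarrow> 'l1 \<Rightarrow> 'p"
    and n m s :: nat
    and R :: "'o \<Rightarrow> 'at \<Rightarrow> 'p"
    and \<sigma> \<sigma>p \<sigma>o :: "'o \<Rightarrow> 'at \<Rightarrow> nat"
    and g :: "'at \<Rightarrow> 'l2" and f :: "'o \<Rightarrow> 'l1"
  assumes frame: "adj_frame n cj sw nw"
    and pframe: "adj_frame m cjp swp nwp"
    and oframe: "adj_frame s cjo swo nwo"
    and sigma: "\<forall>a b. \<sigma> a b \<in> {1..n}"
    and sigmap: "\<forall>a b. \<sigma>p a b \<in> {1..m}"
    and sigmao: "\<forall>a b. \<sigma>o a b \<in> {1..s}"
    and norm: "normalized R"
    and FC: "(g, f) \<in> FC_set swo nwp \<sigma>o \<sigma>p R"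
  shows "(up_op sw \<sigma> R g \<noteq> (\<lambda>_. bot) \<longrightarrow>
           \<not> (\<exists>g0 f0. (g0, f0) \<in> concept_lattice sw nw \<sigma> R \<and>
                concept_less (g, up_op sw \<sigma> R g) (g0, f0) \<and>
                concept_less (g0, f0) ((\<lambda>_. top), (\<lambda>_. bot))))
       \<and> (down_op nw \<sigma> R f \<noteq> (\<lambda>_. bot) \<longrightarrow>
           \<not> (\<exists>g0 f0. (g0, f0) \<in> concept_lattice sw nw \<sigma> R \<and>
                concept_less ((\<lambda>_. bot), (\<lambda>_. top)) (g0, f0) \<and>
                concept_less (g0, f0) (down_op nw \<sigma> R f, f)))"
proof -
  have T: "\<And>a b. adjoint_triple (cj (\<sigma> a b)) (sw (\<sigma> a b)) (nw (\<sigma> a b)) \<and> no_zero_divisors (cj (\<sigma> a b))"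
    using frame sigma unfolding adj_frame_def by blast
  have Tp: "\<And>a b. adjoint_triple (cjp (\<sigma>p a b)) (swp (\<sigma>p a b)) (nwp (\<sigma>p a b)) \<and> no_zero_divisors (cjp (\<sigma>p a b))"
    using pframe sigmap unfolding adj_frame_def by blast
  have To: "\<And>a b. adjoint_triple (cjo (\<sigma>o a b)) (swo (\<sigma>o a b)) (nwo (\<sigma>o a b)) \<and> no_zero_divisors (cjo (\<sigma>o a b))"
    using oframe sigmao unfolding adj_frame_def by blast
  obtain X Y where gX: "g = chi X" and fY: "f = chi Y" and FN: "(g, f) \<in> FN_set swo nwp \<sigma>o \<sigma>p R"
    and Xne: "X \<noteq> {}" and Yne: "Y \<noteq> {}"
    using FC unfolding FC_set_def by blast
  have up: "f a = Inf {swo (\<sigma>o a b) (g b) (R a b) | b. True}" for a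
  proof -
    have "upN_op swo \<sigma>o R g = f" using FN unfolding FN_set_def by simp
    from fun_cong[OF this, of a] show ?thesis unfolding upN_op_def by simp
  qed
  have dn: "g b = Inf {nwp (\<sigma>p a b) (f a) (R a b) | a. True}" for b
  proof -
    have "downN_op nwp \<sigma>p R f = g" using FN unfolding FN_set_def by simp
    from fun_cong[OF this, of b] show ?thesis unfolding downN_op_def by simp
  qed
  have uple: "\<And>a b. f a \<le> swo (\<sigma>o a b) (g b) (R a b)"
    unfolding up by (rule Inf_lower) blast
  have dnle: "\<And>a b. g b \<le> nwp (\<sigma>p a b) (f a) (R a b)"
    unfolding dn by (rule Inf_lower) blast
  have g2: "\<And>b. g b = top \<or> g b = bot" unfolding gX chi_def by auto
  have f2: "\<And>a. f a = top \<or> f a = bot" unfolding fY chi_def by auto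
  obtain bX where bX: "g bX = top" using Xne that unfolding gX chi_def by (metis ex_in_conv)
  obtain aY where aY: "f aY = top" using Yne that unfolding fY chi_def by (metis ex_in_conv)
  have part1: "\<not> (\<exists>g0 f0. (g0, f0) \<in> concept_lattice sw nw \<sigma> R \<and>
                concept_less (g, up_op sw \<sigma> R g) (g0, f0) \<and>
                concept_less (g0, f0) ((\<lambda>_. top), (\<lambda>_. bot)))"
  proof
    assume "\<exists>g0 f0. (g0, f0) \<in> concept_lattice sw nw \<sigma> R \<and>
                concept_less (g, up_op sw \<sigma> R g) (g0, f0) \<and>
                concept_less (g0, f0) ((\<lambda>_. top), (\<lambda>_. bot))"
    then obtain g0 f0 where C: "(g0, f0) \<in> concept_lattice sw nw \<sigma> R"
      and L1: "concept_less (g, up_op sw \<sigma> R g) (g0, f0)"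
      and L2: "concept_less (g0, f0) ((\<lambda>_. top), (\<lambda>_. bot))" by blast
    have f0d: "f0 = up_op sw \<sigma> R g0" and g0d: "g0 = down_op nw \<sigma> R f0"
      using C unfolding concept_lattice_def by auto
    have gle: "g \<le> g0" using L1 unfolding concept_less_def concept_le_def by simp
    have gne: "g \<noteq> g0" using L1 f0d unfolding concept_less_def by auto
    then obtain b0 where b0: "g b0 \<noteq> g0 b0" by auto
    have gb0: "g b0 = bot" using g2[of b0] b0 gle by (metis le_funD top_unique)
    have g0b0: "g0 b0 \<noteq> bot" using gb0 b0 by simp
    have nt: "(top::'l2) \<noteq> bot"
    proof
      assume "(top::'l2) = bot"
      hence "\<And>x::'l2. x = bot" by (metis bot_unique top_greatest)
      hence "g = g0" by (metis ext)
      thus False using gne by simp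
    qed
    have g0bX: "g0 bX = top" using gle bX by (metis le_funD top_unique)
    have ex: "\<exists>b. R a b = bot \<and> g0 b \<noteq> bot" for a
    proof (cases "R a b0 = bot")
      case True thus ?thesis using g0b0 by blast
    next
      case False
      have "f a \<le> swo (\<sigma>o a b0) bot (R a b0)" using uple[of a b0] gb0 by simp
      also have "\<dots> = bot" using at_sw_bot[OF _ _ False] To by blast
      finally have fa: "f a = bot" by (simp add: bot_unique)
      have "R a bX = bot"
      proof (rule ccontr)
        assume nb: "R a bX \<noteq> bot"
        have "g bX \<le> nwp (\<sigma>p a bX) bot (R a bX)" using dnle[of bX a] fa by simp
        also have "\<dots> = bot" using at_nw_bot[OF _ _ nb] Tp by blast
        finally show False using bX nt by (simp add: bot_unique)
      qed
      thus ?thesis using g0bX nt by auto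
    qed
    have f0bot: "f0 a = bot" for a
    proof -
      obtain b where b: "R a b = bot" "g0 b \<noteq> bot" using ex by blast
      have "f0 a \<le> sw (\<sigma> a b) (R a b) (g0 b)"
        unfolding f0d up_op_def by (rule Inf_lower) blast
      also have "\<dots> = bot" using b(1) at_sw_bot[OF conjunct1[OF T[of a b]] conjunct2[OF T[of a b]] b(2)] by simp
      finally show ?thesis by (simp add: bot_unique)
    qed
    have g0top: "g0 b = top" for b
    proof -
      have "g0 b = Inf {nw (\<sigma> a b) (R a b) (f0 a) | a. True}" using g0d unfolding down_op_def by simp
      also have "\<dots> = top" using f0bot at_nw_top[OF conjunct1[OF T]] by (auto intro!: Inf_top_conv(2)[THEN iffD2])
      finally show ?thesis .
    qed
    have "(g0, f0) = ((\<lambda>_. top), (\<lambda>_. bot))" using g0top f0bot by auto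
    thus False using L2 unfolding concept_less_def by simp
  qed
  have part2: "\<not> (\<exists>g0 f0. (g0, f0) \<in> concept_lattice sw nw \<sigma> R \<and>
                concept_less ((\<lambda>_. bot), (\<lambda>_. top)) (g0, f0) \<and>
                concept_less (g0, f0) (down_op nw \<sigma> R f, f))"
  proof
    assume "\<exists>g0 f0. (g0, f0) \<in> concept_lattice sw nw \<sigma> R \<and>
                concept_less ((\<lambda>_. bot), (\<lambda>_. top)) (g0, f0) \<and>
                concept_less (g0, f0) (down_op nw \<sigma> R f, f)"
    then obtain g0 f0 where C: "(g0, f0) \<in> concept_lattice sw nw \<sigma> R"
      and L1: "concept_less ((\<lambda>_. bot), (\<lambda>_. top)) (g0, f0)"
      and L2: "concept_less (g0, f0) (down_op nw \<sigma> R f, f)" by blast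
    have f0d: "f0 = up_op sw \<sigma> R g0" and g0d: "g0 = down_op nw \<sigma> R f0"
      using C unfolding concept_lattice_def by auto
    have gle: "g0 \<le> down_op nw \<sigma> R f" using L2 unfolding concept_less_def concept_le_def by simp
    have fne: "f0 \<noteq> f" using L2 g0d unfolding concept_less_def by auto
    have fle: "f a \<le> f0 a" for a
    proof -
      have "f a \<le> sw (\<sigma> a b) (R a b) (g0 b)" for b
      proof -
        have "g0 b \<le> down_op nw \<sigma> R f b" using gle by (simp add: le_funD)
        also have "\<dots> \<le> nw (\<sigma> a b) (R a b) (f a)" unfolding down_op_def by (rule Inf_lower) blast
        finally show ?thesis using T[of a b] unfolding adjoint_triple_def by blast
      qed
      thus ?thesis unfolding f0d up_op_def by (auto intro!: Inf_greatest)
    qed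
    obtain a0 where a0: "f a0 \<noteq> f0 a0" using fne by (metis ext)
    have fa0: "f a0 = bot" using f2[of a0] a0 fle by (metis top_unique)
    have f0a0: "f0 a0 \<noteq> bot" using fa0 a0 by simp
    have nt: "(top::'l1) \<noteq> bot"
    proof
      assume "(top::'l1) = bot"
      hence "\<And>x::'l1. x = bot" by (metis bot_unique top_greatest)
      hence "f = f0" by (metis ext)
      thus False using fne by simp
    qed
    have f0aY: "f0 aY = top" using fle aY by (metis top_unique)
    have ex: "\<exists>a. R a b = bot \<and> f0 a \<noteq> bot" for b
    proof (cases "R a0 b = bot")
      case True thus ?thesis using f0a0 by blast
    next
      case False
      have "g b \<le> nwp (\<sigma>p a0 b) bot (R a0 b)" using dnle[of b a0] fa0 by simp
      also have "\<dots> = bot" using at_nw_bot[OF _ _ False] Tp by blast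
      finally have gb: "g b = bot" by (simp add: bot_unique)
      have "R aY b = bot"
      proof (rule ccontr)
        assume nb: "R aY b \<noteq> bot"
        have "f aY \<le> swo (\<sigma>o aY b) bot (R aY b)" using uple[of aY b] gb by simp
        also have "\<dots> = bot" using at_sw_bot[OF _ _ nb] To by blast
        finally show False using aY nt by (simp add: bot_unique)
      qed
      thus ?thesis using f0aY nt by auto
    qed
    have g0bot: "g0 b = bot" for b
    proof -
      obtain a where a: "R a b = bot" "f0 a \<noteq> bot" using ex by blast
      have "g0 b \<le> nw (\<sigma> a b) (R a b) (f0 a)"
        unfolding g0d down_op_def by (rule Inf_lower) blast
      also have "\<dots> = bot" using a(1) at_nw_bot[OF conjunct1[OF T[of a b]] conjunct2[OF T[of a b]] a(2)] by simp
      finally show ?thesis by (simp add: bot_unique)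
    qed
    have f0top: "f0 a = top" for a
    proof -
      have "f0 a = Inf {sw (\<sigma> a b) (R a b) (g0 b) | b. True}" using f0d unfolding up_op_def by simp
      also have "\<dots> = top" using g0bot at_sw_top[OF conjunct1[OF T]] by (auto intro!: Inf_top_conv(2)[THEN iffD2])
      finally show ?thesis .
    qed
    have "(g0, f0) = ((\<lambda>_. bot), (\<lambda>_. top))" using g0bot f0top by auto
    thus False using L1 unfolding concept_less_def by simp
  qed
  show ?thesis using part1 part2 by blast
qed

end
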